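(* For the fully online fractional matching problem on arbitrary (not necessarily bipartite) graphs, the Water-Filling algorithm is $(2-\sqrt{2})$-competitive: on every instance, the final fractional matching $x$ produced by Water-Filling satisfies $\sum_{e\in E} x_e \ge (2-\sqrt{2})\cdot \mathrm{OPT}$, where $\mathrm{OPT}$ is the maximum size of a matching in $G$.
   Context: Fully online matching model: an undirected graph $G=(V,E)$ is revealed online. Each step is either the arrival or the deadline of a vertex. When a vertex $v$ arrives, all edges between $v$ and previously arrived vertices are revealed. It is assumed that every neighbor of a vertex $v$ arrives before $v$'s deadline. In the fractional version, the algorithm maintains $x_{uv}\in[0,1]$ for each edge with $x_w:=\sum_{z:(w,z)\in E}x_{wz}\le 1$ for every vertex $w$ (the "water-level" of $w$); for an edge $(u,v)$ where $u$ has the earlier deadline, $x_{uv}$ may only be increased at $u$'s deadline, and all decisions are irrevocable. Water-Filling: at the deadline of a vertex $u$, let $N(u)$ be the set of neighbors of $u$ whose deadlines have not yet been reached; while $x_u<1$ and $\min_{v\in N(u)}x_v<1$, continuously increase $x_{uv}$ at equal rates for all $v\in\arg\min_{v\in N(u)}x_v$. *)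

theory Defs
  imports Complex_Main
begin

text \<open>Graph: finite vertex set V, symmetric irreflexive adjacency E. Edges are
  represented as two-element sets; a fractional matching is a map from edges to reals.\<close>

definition edges :: "'v set \<Rightarrow> ('v \<Rightarrow> 'v \<Rightarrow> bool) \<Rightarrow> 'v set set" where
  "edges V E = {{u, v} | u v. u \<in> V \<and> v \<in> V \<and> E u v}"

definition level :: "'v set set \<Rightarrow> ('v set \<Rightarrow> real) \<Rightarrow> 'v \<Rightarrow> real" where
  "level Es x w = (\<Sum>e\<in>{e\<in>Es. w \<in> e}. x e)"

definition later_nbrs :: "'v set \<Rightarrow> ('v \<Rightarrow> 'v \<Rightarrow> bool) \<Rightarrow> ('v \<Rightarrow> nat) \<Rightarrow> 'v \<Rightarrow> 'v set" where
  "later_nbrs V E dl u = {v \<in> V. E u v \<and> dl u < dl v}"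

text \<open>Final common water level reached by the continuous Water-Filling process at u's
  deadline: the largest l \<le> 1 such that raising every later neighbour below l up to l
  does not push u's level above 1.\<close>
definition fill_level :: "'v set \<Rightarrow> ('v \<Rightarrow> 'v \<Rightarrow> bool) \<Rightarrow> ('v \<Rightarrow> nat) \<Rightarrow> ('v set \<Rightarrow> real) \<Rightarrow> 'v \<Rightarrow> real" where
  "fill_level V E dl x u =
     Sup {l. 0 \<le> l \<and> l \<le> 1 \<and>
          (\<Sum>v\<in>later_nbrs V E dl u. max 0 (l - level (edges V E) x v)) \<le> 1 - level (edges V E) x u}"

definition wf_step :: "'v set \<Rightarrow> ('v \<Rightarrow> 'v \<Rightarrow> bool) \<Rightarrow> ('v \<Rightarrow> nat) \<Rightarrow> ('v set \<Rightarrow> real) \<Rightarrow> 'v \<Rightarrow> ('v set \<Rightarrow> real)" where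
  "wf_step V E dl x u = (\<lambda>e. x e +
     (if e \<in> edges V E \<and> u \<in> e
      then (\<Sum>v\<in>e \<inter> later_nbrs V E dl u. max 0 (fill_level V E dl x u - level (edges V E) x v))
      else 0))"

text \<open>State just before time t: all deadlines at times < t have been processed in order.\<close>
fun wf_state :: "'v set \<Rightarrow> ('v \<Rightarrow> 'v \<Rightarrow> bool) \<Rightarrow> ('v \<Rightarrow> nat) \<Rightarrow> nat \<Rightarrow> ('v set \<Rightarrow> real)" where
  "wf_state V E dl 0 = (\<lambda>_. 0)"
| "wf_state V E dl (Suc t) =
     (if \<exists>u\<in>V. dl u = t
      then wf_step V E dl (wf_state V E dl t) (THE u. u \<in> V \<and> dl u = t)
      else wf_state V E dl t)"

definition water_filling :: "'v set \<Rightarrow> ('v \<Rightarrow> 'v \<Rightarrow> bool) \<Rightarrow> ('v \<Rightarrow> nat) \<Rightarrow> ('v set \<Rightarrow> real)" where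
  "water_filling V E dl = wf_state V E dl (Suc (Max (dl ` V)))"

definition is_matching :: "'v set \<Rightarrow> ('v \<Rightarrow> 'v \<Rightarrow> bool) \<Rightarrow> 'v set set \<Rightarrow> bool" where
  "is_matching V E M \<longleftrightarrow> M \<subseteq> edges V E \<and> (\<forall>e\<in>M. \<forall>f\<in>M. e \<noteq> f \<longrightarrow> e \<inter> f = {})"

definition OPT :: "'v set \<Rightarrow> ('v \<Rightarrow> 'v \<Rightarrow> bool) \<Rightarrow> nat" where
  "OPT V E = Max (card ` {M. is_matching V E M})"

end

theory Submission
  imports Defs
begin


lemma fill_sup:
  fixes \<phi> :: "real \<Rightarrow> real" and c K :: real
  assumes mono: "\<And>l l'. l \<le> l' \<Longrightarrow> \<phi> l \<le> \<phi> l'"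
    and lip: "\<And>l e. 0 \<le> e \<Longrightarrow> \<phi> (l + e) \<le> \<phi> l + K * e" and K: "0 \<le> K"
    and c0: "\<phi> 0 \<le> c"
  shows "0 \<le> Sup {l. 0 \<le> l \<and> l \<le> 1 \<and> \<phi> l \<le> c} \<and> Sup {l. 0 \<le> l \<and> l \<le> 1 \<and> \<phi> l \<le> c} \<le> 1
     \<and> \<phi> (Sup {l. 0 \<le> l \<and> l \<le> 1 \<and> \<phi> l \<le> c}) \<le> c
     \<and> (Sup {l. 0 \<le> l \<and> l \<le> 1 \<and> \<phi> l \<le> c} < 1 \<longrightarrow> \<phi> (Sup {l. 0 \<le> l \<and> l \<le> 1 \<and> \<phi> l \<le> c}) = c)"
proof -
  define A where "A = {l. 0 \<le> l \<and> l \<le> 1 \<and> \<phi> l \<le> c}"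
  define s where "s = Sup A"
  have A0: "0 \<in> A" using c0 by (simp add: A_def)
  have ne: "A \<noteq> {}" using A0 by blast
  have bdd: "bdd_above A" unfolding A_def bdd_above_def by auto
  have s0: "0 \<le> s" unfolding s_def using A0 bdd by (rule cSup_upper)
  have s1: "s \<le> 1" unfolding s_def using ne by (rule cSup_least) (simp add: A_def)
  have up: "\<And>l. l \<in> A \<Longrightarrow> l \<le> s" unfolding s_def using bdd by (simp add: cSup_upper)
  have phs: "\<phi> s \<le> c"
  proof (rule ccontr)
    assume "\<not> \<phi> s \<le> c"
    define e where "e = (\<phi> s - c) / (K + 1)"
    have e0: "e > 0" using \<open>\<not> \<phi> s \<le> c\<close> K by (simp add: e_def)
    have "s - e < Sup A" using e0 by (simp add: s_def)
    then obtain l where l: "l \<in> A" "s - e < l" using less_cSup_iff[OF ne bdd] by blast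
    have ls: "l \<le> s" using up l(1) .
    have "\<phi> s = \<phi> (l + (s - l))" by simp
    also have "\<dots> \<le> \<phi> l + K * (s - l)" using lip[of "s - l" l] ls by simp
    also have "\<dots> \<le> c + K * e" using l K by (intro add_mono) (auto simp: A_def intro: mult_left_mono)
    finally have "\<phi> s \<le> c + K * e" .
    moreover have "(K + 1) * e = \<phi> s - c" using K by (simp add: e_def)
    ultimately show False using e0 by (simp add: algebra_simps)
  qed
  have "s < 1 \<longrightarrow> \<phi> s = c"
  proof
    assume s1': "s < 1"
    show "\<phi> s = c"
    proof (rule ccontr)
      assume "\<phi> s \<noteq> c"
      hence lt: "\<phi> s < c" using phs by simp
      define e where "e = min (1 - s) ((c - \<phi> s) / (K + 1))"
      have e0: "e > 0" using lt s1' K by (simp add: e_def)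
      have "K * e \<le> K * ((c - \<phi> s) / (K + 1))" using K by (intro mult_left_mono) (auto simp: e_def)
      also have "\<dots> \<le> c - \<phi> s" using K lt by (simp add: field_simps)
      finally have "\<phi> (s + e) \<le> c" using lip[of e s] e0 by simp
      moreover have "s + e \<le> 1" by (simp add: e_def)
      ultimately have "s + e \<in> A" using s0 e0 by (simp add: A_def)
      thus False using up e0 by fastforce
    qed
  qed
  thus ?thesis using s0 s1 phs unfolding s_def A_def by blast
qed




definition Gf :: "real \<Rightarrow> real" where "Gf y = (1 - sqrt 2 / 2) * y + sqrt 2 * y^2 / 4"

lemma r2: "sqrt 2 * sqrt 2 = (2::real)" by simp
lemma rb: "sqrt 2 < (2::real)" "1 < sqrt (2::real)"
  by (rule real_less_lsqrt, simp, simp add: power2_eq_square) (rule real_less_rsqrt, simp)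

lemma Gf0: "Gf 0 = 0" by (simp add: Gf_def)

lemma Gf_nonneg: "0 \<le> y \<Longrightarrow> 0 \<le> Gf y"
  unfolding Gf_def using rb by (intro add_nonneg_nonneg) auto

lemma Gf_mono: assumes "0 \<le> a" "a \<le> b" shows "Gf a \<le> Gf b"
proof -
  have "a^2 \<le> b^2" using assms by (intro power_mono) auto
  hence "sqrt 2 * a^2 / 4 \<le> sqrt 2 * b^2 / 4" by (intro divide_right_mono mult_left_mono) auto
  moreover have "(1 - sqrt 2 / 2) * a \<le> (1 - sqrt 2 / 2) * b" using assms rb by (intro mult_left_mono) auto
  ultimately show ?thesis unfolding Gf_def by linarith
qed

lemma Gf1: "2 - sqrt 2 \<le> Gf 1"
proof -
  have "4/3 \<le> sqrt (2::real)"
    by (rule real_le_rsqrt) (simp add: power2_eq_square)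
  thus ?thesis unfolding Gf_def by simp
qed

lemma term_bound:
  assumes "0 \<le> y" "l \<le> 1"
  shows "sqrt 2 / 2 * (1 - l) * max 0 (l - y) \<le> max 0 (l - y) - (Gf (y + max 0 (l - y)) - Gf y)"
proof (cases "l \<le> y")
  case True thus ?thesis by simp
next
  case False
  hence m: "max 0 (l - y) = l - y" by simp
  have "max 0 (l - y) - (Gf (y + max 0 (l - y)) - Gf y) - sqrt 2 / 2 * (1 - l) * max 0 (l - y)
        = sqrt 2 / 4 * (l - y)^2"
    unfolding m Gf_def by (simp add: field_simps power2_eq_square)
  moreover have "0 \<le> sqrt 2 / 4 * (l - y)^2" by simp
  ultimately show ?thesis by linarith
qed

lemma poly_bound:
  fixes p l :: real
  shows "2 - sqrt 2 \<le> Gf p + Gf l + sqrt 2 / 2 * (1 - l) * (1 - p)"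
proof -
  define r where "r = sqrt (2::real)"
  have rr: "r * r = 2" by (simp add: r_def)
  have "Gf p + Gf l + r / 2 * (1 - l) * (1 - p) - (2 - r) = r / 4 * (p + l - 2 + r)^2"
  proof -
    have "r / 4 * (p + l - 2 + r)^2 = r/4 * (p+l)^2 + r/2 * (r - 2) * (p + l) + r/4 * (r - 2)^2"
      by (simp add: power2_eq_square ring_distribs divide_simps)
    also have "r/2 * (r - 2) = 1 - r" using rr by (simp add: right_diff_distrib divide_simps)
    also have "r/4 * (r - 2)^2 = r/4 * (r * r) - r * r + r" by (simp add: algebra_simps power2_eq_square)
    also have "\<dots> = 3 * r / 2 - 2" using rr by simp
    finally have e: "r / 4 * (p + l - 2 + r)^2 = r/4 * (p+l)^2 + (1 - r) * (p + l) + (3 * r / 2 - 2)" .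
    show ?thesis unfolding e Gf_def r_def[symmetric] by (simp add: field_simps power2_eq_square)
  qed
  moreover have "0 \<le> r / 4 * (p + l - 2 + r)^2" by (simp add: r_def)
  ultimately show ?thesis unfolding r_def by linarith
qed




locale wfl =
  fixes V :: "'v set" and E :: "'v \<Rightarrow> 'v \<Rightarrow> bool" and dl :: "'v \<Rightarrow> nat"
  assumes fin: "finite V"
    and inV: "\<And>u v. E u v \<Longrightarrow> u \<in> V \<and> v \<in> V"
    and sym: "\<And>u v. E u v \<Longrightarrow> E v u"
    and irr: "\<And>u. \<not> E u u"
    and inj: "inj_on dl V"
begin

abbreviation "Es \<equiv> edges V E"
abbreviation "L u \<equiv> later_nbrs V E dl u"

lemma fin_Es: "finite Es"
proof -
  have "Es = (\<lambda>(u,v). {u,v}) ` {(u,v). u \<in> V \<and> v \<in> V \<and> E u v}"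
    unfolding edges_def by auto
  moreover have "finite {(u,v). u \<in> V \<and> v \<in> V \<and> E u v}"
    by (rule finite_subset[of _ "V \<times> V"]) (auto simp: fin)
  ultimately show ?thesis by simp
qed

lemma Es_sub: "e \<in> Es \<Longrightarrow> e \<subseteq> V"
  unfolding edges_def using inV by auto

lemma fin_L: "finite (L u)"
  unfolding later_nbrs_def using fin by simp

lemma L_sub: "L u \<subseteq> V" unfolding later_nbrs_def by auto

lemma u_notin_L: "u \<notin> L u" unfolding later_nbrs_def by simp

lemma both: assumes "u \<noteq> w"
  shows "{e\<in>Es. u \<in> e \<and> w \<in> e} = (if E u w then {{u,w}} else {})"
proof -
  have "e = {u,w} \<and> E u w" if h: "e \<in> Es" "u \<in> e" "w \<in> e" for e
  proof -
    obtain a b where ab: "e = {a,b}" "E a b" using h(1) unfolding edges_def by blast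
    hence "e = {u,w}" using h assms by auto
    moreover have "E u w" using ab h assms sym by auto
    ultimately show ?thesis by simp
  qed
  moreover have "E u w \<Longrightarrow> {u,w} \<in> Es" unfolding edges_def using inV by blast
  ultimately show ?thesis by auto
qed

lemma incr_u: "(\<Sum>e\<in>{e\<in>Es. u \<in> e}. \<Sum>v\<in>e \<inter> L u. d v) = (\<Sum>v\<in>L u. (d v :: real))"
proof -
  have "(\<Sum>e\<in>{e\<in>Es. u \<in> e}. \<Sum>v\<in>e \<inter> L u. d v) = (\<Sum>e\<in>{e\<in>Es. u \<in> e}. \<Sum>v\<in>{v\<in>L u. v \<in> e}. d v)"
    by (intro sum.cong) auto
  also have "\<dots> = (\<Sum>v\<in>L u. \<Sum>e\<in>{e\<in>{e\<in>Es. u \<in> e}. v \<in> e}. d v)"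
    by (rule sum.swap_restrict) (auto simp: fin_Es fin_L)
  also have "\<dots> = (\<Sum>v\<in>L u. d v)"
  proof (intro sum.cong refl)
    fix v assume v: "v \<in> L u"
    hence "E u v" "u \<noteq> v" using u_notin_L by (auto simp: later_nbrs_def)
    hence "{e\<in>{e\<in>Es. u \<in> e}. v \<in> e} = {{u,v}}" using both[of u v] by auto
    thus "(\<Sum>e\<in>{e\<in>{e\<in>Es. u \<in> e}. v \<in> e}. d v) = d v" by simp
  qed
  finally show ?thesis .
qed

definition dd :: "('v set \<Rightarrow> real) \<Rightarrow> 'v \<Rightarrow> 'v \<Rightarrow> real" where
  "dd x u v = max 0 (fill_level V E dl x u - level Es x v)"

lemma step_level:
  "level Es (wf_step V E dl x u) w = level Es x w +
     (if w = u then (\<Sum>v\<in>L u. dd x u v) else if w \<in> L u then dd x u w else 0)"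
proof -
  have "level Es (wf_step V E dl x u) w = level Es x w +
     (\<Sum>e\<in>{e\<in>Es. w \<in> e}. if u \<in> e then (\<Sum>v\<in>e \<inter> L u. dd x u v) else 0)"
    unfolding level_def wf_step_def dd_def by (simp add: sum.distrib)
  also have "(\<Sum>e\<in>{e\<in>Es. w \<in> e}. if u \<in> e then (\<Sum>v\<in>e \<inter> L u. dd x u v) else 0)
      = (\<Sum>e\<in>{e\<in>Es. u \<in> e \<and> w \<in> e}. (\<Sum>v\<in>e \<inter> L u. dd x u v))"
    using fin_Es by (simp add: sum.If_cases Int_def) (rule sum.cong, auto)
  also have "\<dots> = (if w = u then (\<Sum>v\<in>L u. dd x u v) else if w \<in> L u then dd x u w else 0)"
  proof (cases "w = u")
    case True thus ?thesis using incr_u[where d="dd x u"] by simp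
  next
    case False
    show ?thesis
    proof (cases "E u w")
      case True
      have "{u,w} \<inter> L u = (if w \<in> L u then {w} else {})" using u_notin_L[of u] by auto
      thus ?thesis using both[of u w] False True by auto
    next
      case F2: False
      hence "w \<notin> L u" by (auto simp: later_nbrs_def)
      moreover have emp: "{e\<in>Es. u \<in> e \<and> w \<in> e} = {}" using both[of u w] False F2 by simp
      ultimately show ?thesis using False by (simp add: emp)
    qed
  qed
  finally show ?thesis .
qed

lemma step_total:
  "(\<Sum>e\<in>Es. wf_step V E dl x u e) = (\<Sum>e\<in>Es. x e) + (\<Sum>v\<in>L u. dd x u v)"
proof -
  have "(\<Sum>e\<in>Es. wf_step V E dl x u e) = (\<Sum>e\<in>Es. x e) +
     (\<Sum>e\<in>Es. if u \<in> e then (\<Sum>v\<in>e \<inter> L u. dd x u v) else 0)"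
    unfolding wf_step_def dd_def by (simp add: sum.distrib)
  also have "(\<Sum>e\<in>Es. if u \<in> e then (\<Sum>v\<in>e \<inter> L u. dd x u v) else 0)
     = (\<Sum>e\<in>{e\<in>Es. u \<in> e}. (\<Sum>v\<in>e \<inter> L u. dd x u v))"
    using fin_Es by (simp add: sum.If_cases Int_def)
  finally show ?thesis using incr_u[where d="dd x u"] by simp
qed

end



context wfl begin

abbreviation "S t \<equiv> wf_state V E dl t"
abbreviation "lev t w \<equiv> level Es (S t) w"

lemma step_at: assumes "u \<in> V" shows "S (Suc (dl u)) = wf_step V E dl (S (dl u)) u"
proof -
  have "(THE u'. u' \<in> V \<and> dl u' = dl u) = u"
    using assms inj by (intro the_equality) (auto dest: inj_onD)
  thus ?thesis using assms by auto
qed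

lemma step_none: "\<not> (\<exists>u\<in>V. dl u = t) \<Longrightarrow> S (Suc t) = S t" by simp

declare wf_state.simps(2)[simp del]

lemma S_cases: "S (Suc t) = S t \<or> (\<exists>u\<in>V. dl u = t \<and> S (Suc t) = wf_step V E dl (S t) u)"
proof (cases "\<exists>u\<in>V. dl u = t")
  case True
  then obtain u where u: "u \<in> V" "dl u = t" by blast
  show ?thesis using step_at[OF u(1)] u by auto
next
  case False thus ?thesis using step_none by simp
qed

lemma dd_nonneg: "0 \<le> dd x u v" by (simp add: dd_def)

lemma step_ge: "x e \<le> wf_step V E dl x u e"
proof -
  have "0 \<le> (\<Sum>v\<in>e \<inter> L u. max 0 (fill_level V E dl x u - level Es x v))"
    by (intro sum_nonneg) simp
  thus ?thesis unfolding wf_step_def by simp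
qed

lemma S_mono1: "S t e \<le> S (Suc t) e"
proof -
  from S_cases[of t] show ?thesis
  proof
    assume "S (Suc t) = S t" thus ?thesis by simp
  next
    assume "\<exists>u\<in>V. dl u = t \<and> S (Suc t) = wf_step V E dl (S t) u"
    then obtain u where "S (Suc t) = wf_step V E dl (S t) u" by blast
    thus ?thesis using step_ge by simp
  qed
qed

lemma S_nonneg: "0 \<le> S t e"
proof (induction t)
  case 0 thus ?case by simp
next
  case (Suc t) thus ?case using S_mono1[of t e] by linarith
qed

lemma level_mono: "(\<And>e. x e \<le> x' e) \<Longrightarrow> level Es x w \<le> level Es x' w"
  unfolding level_def by (rule sum_mono)

lemma level_nonneg: "(\<And>e. 0 \<le> x e) \<Longrightarrow> 0 \<le> level Es x w"
  unfolding level_def by (rule sum_nonneg)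

lemma lev_nonneg: "0 \<le> lev t w" using level_nonneg S_nonneg by blast

lemma lev_mono: "t \<le> t' \<Longrightarrow> lev t w \<le> lev t' w"
proof -
  have "mono (\<lambda>t. lev t w)" 
    by (rule mono_iff_le_Suc[THEN iffD2]) (auto intro: level_mono S_mono1)
  thus "t \<le> t' \<Longrightarrow> lev t w \<le> lev t' w" by (simp add: mono_def)
qed

lemma fill_props:
  assumes nn: "\<And>v. 0 \<le> level Es x v" and le1: "level Es x u \<le> 1"
  shows "0 \<le> fill_level V E dl x u \<and> fill_level V E dl x u \<le> 1
    \<and> (\<Sum>v\<in>L u. dd x u v) \<le> 1 - level Es x u
    \<and> (fill_level V E dl x u < 1 \<longrightarrow> (\<Sum>v\<in>L u. dd x u v) = 1 - level Es x u)"
proof -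
  define \<phi> where "\<phi> = (\<lambda>l. \<Sum>v\<in>L u. max 0 (l - level Es x v))"
  have mono: "\<phi> l \<le> \<phi> l'" if "l \<le> l'" for l l'
    unfolding \<phi>_def using that by (intro sum_mono) auto
  have lip: "\<phi> (l + e) \<le> \<phi> l + real (card (L u)) * e" if "0 \<le> e" for l e
  proof -
    have "\<phi> (l + e) \<le> (\<Sum>v\<in>L u. max 0 (l - level Es x v) + e)"
      unfolding \<phi>_def using that by (intro sum_mono) auto
    also have "\<dots> = \<phi> l + real (card (L u)) * e" by (simp add: \<phi>_def sum.distrib)
    finally show ?thesis .
  qed
  have c0: "\<phi> 0 \<le> 1 - level Es x u"
  proof -
    have "\<phi> 0 = 0" unfolding \<phi>_def using nn by (intro sum.neutral) (simp add: nn max.absorb1)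
    thus ?thesis using le1 by simp
  qed
  have eq: "fill_level V E dl x u = Sup {l. 0 \<le> l \<and> l \<le> 1 \<and> \<phi> l \<le> 1 - level Es x u}"
    unfolding fill_level_def \<phi>_def ..
  have sd: "(\<Sum>v\<in>L u. dd x u v) = \<phi> (fill_level V E dl x u)"
    unfolding dd_def \<phi>_def ..
  have K: "0 \<le> real (card (L u))" by simp
  show ?thesis unfolding sd eq using fill_sup[OF mono lip K c0] by simp
qed

lemma lev_le1: "lev t w \<le> 1"
proof (induction t arbitrary: w)
  case 0 thus ?case by (simp add: level_def)
next
  case (Suc t)
  show ?case
  proof (cases "S (Suc t) = S t")
    case True thus ?thesis using Suc by simp
  next
    case False
    then obtain u where u: "u \<in> V" "S (Suc t) = wf_step V E dl (S t) u" using S_cases by blast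
    note fp = fill_props[of "S t" u, OF lev_nonneg Suc]
    have eq: "lev (Suc t) w = lev t w +
     (if w = u then (\<Sum>v\<in>L u. dd (S t) u v) else if w \<in> L u then dd (S t) u w else 0)"
      unfolding u(2) by (rule step_level)
    have d: "lev t w + dd (S t) u w \<le> 1"
    proof -
      have "fill_level V E dl (S t) u \<le> 1" using fp by blast
      thus ?thesis using Suc[of w] unfolding dd_def by (simp add: max_def)
    qed
    show ?thesis
    proof (cases "w = u")
      case True
      hence "lev (Suc t) w = lev t u + (\<Sum>v\<in>L u. dd (S t) u v)" using eq by (simp only: if_True refl)
      moreover have "(\<Sum>v\<in>L u. dd (S t) u v) \<le> 1 - lev t u" using fp by blast
      ultimately show ?thesis by linarith
    next
      case False
      show ?thesis
      proof (cases "w \<in> L u")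
        case True
        hence "lev (Suc t) w = lev t w + dd (S t) u w" using eq False by (simp only: if_True if_False)
        thus ?thesis using d by linarith
      next
        case F2: False
        hence "lev (Suc t) w = lev t w + 0" using eq False by (simp only: if_True if_False)
        thus ?thesis using Suc[of w] by linarith
      qed
    qed
  qed
qed

end



context wfl begin

definition alpha :: "'v \<Rightarrow> real" where
  "alpha u = Gf (lev (dl u) u) + (lev (Suc (dl u)) u - lev (dl u) u)
     - (\<Sum>v\<in>L u. Gf (lev (Suc (dl u)) v) - Gf (lev (dl u) v))"

lemma step_lev_at: assumes "u \<in> V"
  shows "lev (Suc (dl u)) w = lev (dl u) w +
     (if w = u then (\<Sum>v\<in>L u. dd (S (dl u)) u v) else if w \<in> L u then dd (S (dl u)) u w else 0)"
  unfolding step_at[OF assms] by (rule step_level)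

lemma level_zero: "level Es (\<lambda>_. 0) w = 0" by (simp add: level_def)

lemma inv: "(\<Sum>e\<in>Es. S t e) = (\<Sum>u\<in>{u\<in>V. dl u < t}. alpha u) + (\<Sum>w\<in>{w\<in>V. t \<le> dl w}. Gf (lev t w))"
proof (induction t)
  case 0 thus ?case by (simp add: level_zero Gf0)
next
  case (Suc t)
  show ?case
  proof (cases "\<exists>u\<in>V. dl u = t")
    case False
    hence "S (Suc t) = S t" by (rule step_none)
    moreover have "{u\<in>V. dl u < Suc t} = {u\<in>V. dl u < t}" using False by (auto simp: less_Suc_eq)
    moreover have "{w\<in>V. Suc t \<le> dl w} = {w\<in>V. t \<le> dl w}" using False by (auto simp: Suc_le_eq order_le_less)
    ultimately show ?thesis using Suc.IH by simp
  next
    case True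
    then obtain u where u: "u \<in> V" "dl u = t" by blast
    define T1 where "T1 = {w\<in>V. Suc t \<le> dl w}"
    have A1: "{u'\<in>V. dl u' < Suc t} = insert u {u'\<in>V. dl u' < t}" using u by (auto simp: less_Suc_eq inj_onD[OF inj])
    have T0: "{w\<in>V. t \<le> dl w} = insert u T1" using u by (auto simp: T1_def Suc_le_eq order_le_less inj_onD[OF inj])
    have uT1: "u \<notin> T1" using u by (simp add: T1_def)
    have finT1: "finite T1" using fin by (simp add: T1_def)
    have Lsub: "L u \<subseteq> T1" using u by (auto simp: T1_def later_nbrs_def Suc_le_eq)
    have same: "lev (Suc t) w = lev t w" if "w \<in> T1 - L u" for w
    proof -
      have "w \<noteq> u" using that uT1 by blast
      thus ?thesis using step_lev_at[OF u(1), of w] that u(2) by simp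
    qed
    have tot: "(\<Sum>e\<in>Es. S (Suc t) e) = (\<Sum>e\<in>Es. S t e) + (lev (Suc t) u - lev t u)"
      using step_total step_at[OF u(1)] step_lev_at[OF u(1), of u] u(2) by simp
    have "(\<Sum>w\<in>T1. Gf (lev (Suc t) w) - Gf (lev t w)) = (\<Sum>v\<in>L u. Gf (lev (Suc t) v) - Gf (lev t v))"
      by (rule sum.mono_neutral_right[OF finT1 Lsub]) (simp add: same)
    hence sT1: "(\<Sum>w\<in>T1. Gf (lev (Suc t) w)) = (\<Sum>w\<in>T1. Gf (lev t w)) + (\<Sum>v\<in>L u. Gf (lev (Suc t) v) - Gf (lev t v))"
      by (simp add: sum_subtractf)
    have "(\<Sum>u'\<in>{u'\<in>V. dl u' < Suc t}. alpha u') = alpha u + (\<Sum>u'\<in>{u'\<in>V. dl u' < t}. alpha u')"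
      unfolding A1 using fin u by (simp)
    moreover have "(\<Sum>w\<in>{w\<in>V. t \<le> dl w}. Gf (lev t w)) = Gf (lev t u) + (\<Sum>w\<in>T1. Gf (lev t w))"
      unfolding T0 using finT1 uT1 by simp
    moreover have "{w\<in>V. Suc t \<le> dl w} = T1" by (simp add: T1_def)
    ultimately show ?thesis using Suc.IH tot sT1 u(2) unfolding alpha_def by simp
  qed
qed

end



context wfl begin

lemma alpha_eq: assumes u: "u \<in> V"
  shows "alpha u = Gf (lev (dl u) u) + (\<Sum>v\<in>L u. dd (S (dl u)) u v
      - (Gf (lev (dl u) v + dd (S (dl u)) u v) - Gf (lev (dl u) v)))"
proof -
  have a: "lev (Suc (dl u)) u - lev (dl u) u = (\<Sum>v\<in>L u. dd (S (dl u)) u v)"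
    using step_lev_at[OF u, of u] by simp
  have b: "(\<Sum>v\<in>L u. Gf (lev (Suc (dl u)) v) - Gf (lev (dl u) v))
      = (\<Sum>v\<in>L u. Gf (lev (dl u) v + dd (S (dl u)) u v) - Gf (lev (dl u) v))"
  proof (rule sum.cong[OF refl])
    fix v assume v: "v \<in> L u"
    hence "v \<noteq> u" using u_notin_L by blast
    thus "Gf (lev (Suc (dl u)) v) - Gf (lev (dl u) v) = Gf (lev (dl u) v + dd (S (dl u)) u v) - Gf (lev (dl u) v)"
      using step_lev_at[OF u, of v] v by simp
  qed
  show ?thesis unfolding alpha_def a b by (simp add: sum_subtractf)
qed

lemma alpha_lb: assumes u: "u \<in> V"
  shows "Gf (lev (dl u) u) + sqrt 2 / 2 * (1 - fill_level V E dl (S (dl u)) u) * (\<Sum>v\<in>L u. dd (S (dl u)) u v) \<le> alpha u"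
proof -
  define l where "l = fill_level V E dl (S (dl u)) u"
  have fp: "0 \<le> l" "l \<le> 1" using fill_props[of "S (dl u)" u, OF lev_nonneg lev_le1] by (auto simp: l_def)
  have "sqrt 2 / 2 * (1 - l) * (\<Sum>v\<in>L u. dd (S (dl u)) u v)
     = (\<Sum>v\<in>L u. sqrt 2 / 2 * (1 - l) * dd (S (dl u)) u v)" by (simp add: sum_distrib_left)
  also have "\<dots> \<le> (\<Sum>v\<in>L u. dd (S (dl u)) u v - (Gf (lev (dl u) v + dd (S (dl u)) u v) - Gf (lev (dl u) v)))"
  proof (rule sum_mono)
    fix v assume "v \<in> L u"
    show "sqrt 2 / 2 * (1 - l) * dd (S (dl u)) u v \<le> dd (S (dl u)) u v - (Gf (lev (dl u) v + dd (S (dl u)) u v) - Gf (lev (dl u) v))"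
      unfolding dd_def l_def[symmetric] by (rule term_bound[OF lev_nonneg fp(2)])
  qed
  finally show ?thesis unfolding alpha_eq[OF u] l_def by linarith
qed

lemma alpha_nonneg: assumes u: "u \<in> V" shows "0 \<le> alpha u"
proof -
  have "fill_level V E dl (S (dl u)) u \<le> 1"
    using fill_props[of "S (dl u)" u, OF lev_nonneg lev_le1] by blast
  hence "0 \<le> sqrt 2 / 2 * (1 - fill_level V E dl (S (dl u)) u) * (\<Sum>v\<in>L u. dd (S (dl u)) u v)"
    by (intro mult_nonneg_nonneg sum_nonneg dd_nonneg) auto
  moreover have "0 \<le> Gf (lev (dl u) u)" by (rule Gf_nonneg[OF lev_nonneg])
  ultimately show ?thesis using alpha_lb[OF u] by linarith
qed

lemma edge_bound: assumes e: "E u v" and lt: "dl u < dl v"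
  shows "2 - sqrt 2 \<le> alpha u + alpha v"
proof -
  have u: "u \<in> V" and v: "v \<in> V" using inV[OF e] by auto
  have vL: "v \<in> L u" using e lt v by (simp add: later_nbrs_def)
  define l where "l = fill_level V E dl (S (dl u)) u"
  define p where "p = lev (dl u) u"
  have fp: "0 \<le> l" "l \<le> 1" "(l < 1 \<longrightarrow> (\<Sum>v\<in>L u. dd (S (dl u)) u v) = 1 - p)"
    using fill_props[of "S (dl u)" u, OF lev_nonneg lev_le1] by (auto simp: l_def p_def)
  have "v \<noteq> u" using vL u_notin_L by blast
  hence "lev (Suc (dl u)) v = lev (dl u) v + dd (S (dl u)) u v" using step_lev_at[OF u, of v] vL by simp
  also have "\<dots> \<ge> l" unfolding dd_def l_def[symmetric] by (simp add: max_def)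
  finally have "l \<le> lev (Suc (dl u)) v" .
  also have "\<dots> \<le> lev (dl v) v" using lt by (intro lev_mono) simp
  finally have lv: "l \<le> lev (dl v) v" .
  have av: "Gf l \<le> alpha v"
  proof -
    have "fill_level V E dl (S (dl v)) v \<le> 1"
      using fill_props[of "S (dl v)" v, OF lev_nonneg lev_le1] by blast
    hence "0 \<le> sqrt 2 / 2 * (1 - fill_level V E dl (S (dl v)) v) * (\<Sum>w\<in>L v. dd (S (dl v)) v w)"
      by (intro mult_nonneg_nonneg sum_nonneg dd_nonneg) auto
    moreover have "Gf l \<le> Gf (lev (dl v) v)" using fp(1) lv by (rule Gf_mono)
    ultimately show ?thesis using alpha_lb[OF v] by linarith
  qed
  show ?thesis
  proof (cases "l < 1")
    case True
    hence "(\<Sum>v\<in>L u. dd (S (dl u)) u v) = 1 - p" using fp(3) by blast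
    hence "Gf p + sqrt 2 / 2 * (1 - l) * (1 - p) \<le> alpha u" using alpha_lb[OF u] by (simp add: l_def p_def)
    thus ?thesis using av poly_bound[of p l] by linarith
  next
    case False
    hence "l = 1" using fp(2) by simp
    thus ?thesis using av Gf1 alpha_nonneg[OF u] by simp
  qed
qed

lemma edge_bound2: assumes e: "E u v" shows "2 - sqrt 2 \<le> alpha u + alpha v"
proof -
  have u: "u \<in> V" and v: "v \<in> V" using inV[OF e] by auto
  have "u \<noteq> v" using e irr by blast
  hence "dl u \<noteq> dl v" using inj u v by (auto dest: inj_onD)
  hence "dl u < dl v \<or> dl v < dl u" by arith
  thus ?thesis using edge_bound[OF e] edge_bound[OF sym[OF e]] by auto
qed

lemma total_eq: "(\<Sum>e\<in>Es. water_filling V E dl e) = (\<Sum>u\<in>V. alpha u)"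
proof -
  define T where "T = Suc (Max (dl ` V))"
  have lt: "dl u < T" if "u \<in> V" for u
    using that fin by (simp add: T_def le_imp_less_Suc)
  have A: "{u\<in>V. dl u < T} = V" using lt by auto
  have B: "{w\<in>V. T \<le> dl w} = {}" using lt by fastforce
  show ?thesis unfolding water_filling_def T_def[symmetric] using inv[of T] unfolding A B by simp
qed

lemma main: "(2 - sqrt 2) * real (OPT V E) \<le> (\<Sum>e\<in>Es. water_filling V E dl e)"
proof -
  define Ms where "Ms = {M. is_matching V E M}"
  have finMs: "finite Ms" unfolding Ms_def is_matching_def
    by (rule finite_subset[of _ "Pow Es"]) (auto simp: fin_Es)
  have "{} \<in> Ms" by (simp add: Ms_def is_matching_def)
  hence "OPT V E \<in> card ` Ms" unfolding OPT_def Ms_def[symmetric] using finMs by (intro Max_in) auto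
  then obtain M where M: "is_matching V E M" "card M = OPT V E" by (auto simp: Ms_def)
  have MEs: "M \<subseteq> Es" and disj: "\<forall>e\<in>M. \<forall>f\<in>M. e \<noteq> f \<longrightarrow> e \<inter> f = {}" using M(1) by (auto simp: is_matching_def)
  have finM: "finite M" using MEs fin_Es finite_subset by blast
  have fine: "\<forall>e\<in>M. finite e" using MEs Es_sub fin finite_subset by blast
  have "(2 - sqrt 2) * real (OPT V E) = (\<Sum>e\<in>M. 2 - sqrt 2)" using M(2) by simp
  also have "\<dots> \<le> (\<Sum>e\<in>M. \<Sum>w\<in>e. alpha w)"
  proof (rule sum_mono)
    fix e assume "e \<in> M"
    hence "e \<in> Es" using MEs by blast
    then obtain a b where ab: "e = {a,b}" "E a b" unfolding edges_def by blast
    have "a \<noteq> b" using ab irr by blast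
    thus "2 - sqrt 2 \<le> (\<Sum>w\<in>e. alpha w)" using ab edge_bound2[OF ab(2)] by simp
  qed
  also have "\<dots> = (\<Sum>w\<in>\<Union>M. alpha w)" using sum.Union_disjoint[OF fine disj, of alpha] by (simp add: o_def)
  also have "\<dots> \<le> (\<Sum>w\<in>V. alpha w)"
    using MEs Es_sub by (intro sum_mono2 fin) (auto intro: alpha_nonneg)
  finally show ?thesis using total_eq by simp
qed

end

theorem theorem3p1:
  fixes V :: "'v set" and E :: "'v \<Rightarrow> 'v \<Rightarrow> bool" and arr dl :: "'v \<Rightarrow> nat"
  assumes "finite V"
    and "\<forall>u v. E u v \<longrightarrow> u \<in> V \<and> v \<in> V"
    and "\<forall>u v. E u v \<longrightarrow> E v u"
    and "\<forall>u. \<not> E u u"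
    and "inj_on arr V" and "inj_on dl V"
    and "\<forall>u\<in>V. \<forall>v\<in>V. arr u \<noteq> dl v"
    and "\<forall>v\<in>V. arr v < dl v"
    and "\<forall>u v. E u v \<longrightarrow> arr u < dl v"
  shows "(\<Sum>e\<in>edges V E. water_filling V E dl e) \<ge> (2 - sqrt 2) * real (OPT V E)"
proof -
  interpret wfl V E dl using assms by unfold_locales auto
  show ?thesis using main by simp
qed

end
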